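(* Let $G$ be a finitely generated residually finite group and $\phi\in\operatorname{Aut}(G)$. If $\operatorname{Stab}_\phi(g)$ is infinite for some $g\in G$, then $R(\phi)=\infty$.
   Context: For an endomorphism $\phi$ of $G$, $R(\phi)\in\mathbb{N}\cup\{\infty\}$ is the number of classes of the relation $x\sim hx\phi(h)^{-1}$ ($h\in G$). The $\phi$-stabiliser of $g\in G$ is $\operatorname{Stab}_\phi(g)=\{b\in G\mid g=bg\phi(b)^{-1}\}$. *)

theory Defs
  imports "HOL-Algebra.Algebra"
begin

definition fin_gen_group :: "('a, 'b) monoid_scheme \<Rightarrow> bool" where
  "fin_gen_group G \<longleftrightarrow> (\<exists>S. finite S \<and> S \<subseteq> carrier G \<and> generate G S = carrier G)"

definition residually_finite :: "('a, 'b) monoid_scheme \<Rightarrow> bool" where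
  "residually_finite G \<longleftrightarrow>
     (\<forall>g\<in>carrier G. g \<noteq> \<one>\<^bsub>G\<^esub> \<longrightarrow>
        (\<exists>N. N \<lhd> G \<and> finite (rcosets\<^bsub>G\<^esub> N) \<and> g \<notin> N))"

definition twisted_conj :: "('a, 'b) monoid_scheme \<Rightarrow> ('a \<Rightarrow> 'a) \<Rightarrow> ('a \<times> 'a) set" where
  "twisted_conj G \<phi> = {(x, y). x \<in> carrier G \<and> y \<in> carrier G \<and>
      (\<exists>h\<in>carrier G. y = h \<otimes>\<^bsub>G\<^esub> x \<otimes>\<^bsub>G\<^esub> inv\<^bsub>G\<^esub> (\<phi> h))}"

text \<open>The set of Reidemeister (twisted conjugacy) classes; R(phi) is its cardinality,
  and R(phi) = infinity means this set is infinite.\<close>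
definition reidemeister_classes :: "('a, 'b) monoid_scheme \<Rightarrow> ('a \<Rightarrow> 'a) \<Rightarrow> 'a set set" where
  "reidemeister_classes G \<phi> = carrier G // twisted_conj G \<phi>"

definition twisted_stab :: "('a, 'b) monoid_scheme \<Rightarrow> ('a \<Rightarrow> 'a) \<Rightarrow> 'a \<Rightarrow> 'a set" where
  "twisted_stab G \<phi> g = {b \<in> carrier G. g = b \<otimes>\<^bsub>G\<^esub> g \<otimes>\<^bsub>G\<^esub> inv\<^bsub>G\<^esub> (\<phi> b)}"

end

theory Submission
  imports Defs Complex_Main
begin


lemma egypt_aux:
  fixes k :: nat
  shows "\<forall>q::real. q > 0 \<longrightarrow> (\<exists>B::nat. \<forall>(A::'x set) (s::'x \<Rightarrow> nat). finite A \<longrightarrow> card A \<le> k \<longrightarrow>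
           (\<forall>a\<in>A. 0 < s a) \<longrightarrow> (\<Sum>a\<in>A. 1 / real (s a)) = q \<longrightarrow> (\<forall>a\<in>A. s a \<le> B))"
proof (induction k)
  case 0
  then show ?case by auto
next
  case (Suc k)
  show ?case
  proof (intro allI impI)
    fix q :: real assume q: "q > 0"
    define c0 where "c0 = nat \<lfloor>real (Suc k) / q\<rfloor>"
    have "\<forall>c. \<exists>B::nat. (0 < q - 1 / real c \<longrightarrow> (\<forall>(A::'x set) (s::'x \<Rightarrow> nat). finite A \<longrightarrow> card A \<le> k \<longrightarrow>
           (\<forall>a\<in>A. 0 < s a) \<longrightarrow> (\<Sum>a\<in>A. 1 / real (s a)) = q - 1 / real c \<longrightarrow> (\<forall>a\<in>A. s a \<le> B)))"
      using Suc.IH by blast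
    then obtain Bf where Bf: "\<And>c A s. 0 < q - 1 / real c \<Longrightarrow> finite (A::'x set) \<Longrightarrow> card A \<le> k \<Longrightarrow>
           (\<forall>a\<in>A. 0 < (s::'x\<Rightarrow>nat) a) \<Longrightarrow> (\<Sum>a\<in>A. 1 / real (s a)) = q - 1 / real c \<Longrightarrow> (\<forall>a\<in>A. s a \<le> Bf c)"
      by metis
    define B where "B = max c0 (Max (Bf ` {..c0}))"
    show "\<exists>B::nat. \<forall>(A::'x set) (s::'x \<Rightarrow> nat). finite A \<longrightarrow> card A \<le> Suc k \<longrightarrow>
           (\<forall>a\<in>A. 0 < s a) \<longrightarrow> (\<Sum>a\<in>A. 1 / real (s a)) = q \<longrightarrow> (\<forall>a\<in>A. s a \<le> B)"
    proof (intro exI allI impI)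
      fix A :: "'x set" and s :: "'x \<Rightarrow> nat"
      assume fA: "finite A" and cA: "card A \<le> Suc k" and pos: "\<forall>a\<in>A. 0 < s a"
        and sq: "(\<Sum>a\<in>A. 1 / real (s a)) = q"
      have Ane: "A \<noteq> {}" using sq q by auto
      have "\<exists>a0\<in>A. q / real (Suc k) \<le> 1 / real (s a0)"
      proof (rule ccontr)
        assume "\<not> ?thesis"
        then have lt: "\<forall>a\<in>A. 1 / real (s a) < q / real (Suc k)" by auto
        have "(\<Sum>a\<in>A. 1 / real (s a)) < (\<Sum>a\<in>A. q / real (Suc k))"
          using lt by (intro sum_strict_mono[OF fA Ane]) simp
        also have "\<dots> = real (card A) * (q / real (Suc k))" by simp
        also have "\<dots> \<le> real (Suc k) * (q / real (Suc k))"
          using cA q by (intro mult_right_mono) simp_all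
        also have "\<dots> = q" by simp
        finally show False using sq by simp
      qed
      then obtain a0 where a0: "a0 \<in> A" and ha0: "q / real (Suc k) \<le> 1 / real (s a0)" by blast
      have sa0pos: "0 < s a0" using pos a0 by auto
      have "q * real (s a0) \<le> real (Suc k)"
        using ha0 sa0pos q by (simp add: field_simps)
      hence "real (s a0) \<le> real (Suc k) / q" using q by (simp add: field_simps)
      hence sa0: "s a0 \<le> c0" unfolding c0_def by linarith
      have c0B: "c0 \<le> B" unfolding B_def by simp
      define A' where "A' = A - {a0}"
      have fA': "finite A'" using fA A'_def by auto
      have cA': "card A' \<le> k" using cA a0 fA by (simp add: A'_def)
      have sumA': "(\<Sum>a\<in>A'. 1 / real (s a)) = q - 1 / real (s a0)"
        using sq a0 fA unfolding A'_def by (simp add: sum_diff1)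
      show "\<forall>a\<in>A. s a \<le> B"
      proof
        fix a assume aA: "a \<in> A"
        show "s a \<le> B"
        proof (cases "a = a0")
          case True then show ?thesis using sa0 c0B by simp
        next
          case False
          then have aA': "a \<in> A'" using aA A'_def by auto
          have "0 < (\<Sum>a\<in>A'. 1 / real (s a))"
            using aA' fA' pos A'_def by (intro sum_pos2[of A' a]) auto
          hence pq: "0 < q - 1 / real (s a0)" using sumA' by simp
          have "s a \<le> Bf (s a0)"
            using Bf[OF pq fA' cA' _ sumA'] pos A'_def aA' by auto
          also have "\<dots> \<le> Max (Bf ` {..c0})" using sa0 by (intro Max_ge) auto
          also have "\<dots> \<le> B" unfolding B_def by simp
          finally show ?thesis .
        qed
      qed
    qed
  qed
qed

lemma egypt:
  fixes k :: nat
  shows "\<exists>B::nat. \<forall>(A::'x set) (s::'x \<Rightarrow> nat). finite A \<longrightarrow> card A \<le> k \<longrightarrow>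
           (\<forall>a\<in>A. 0 < s a) \<longrightarrow> (\<Sum>a\<in>A. 1 / real (s a)) = 1 \<longrightarrow> (\<forall>a\<in>A. s a \<le> B)"
  using egypt_aux[of k, rule_format, of 1] by simp



lemma card_image_eqv:
  assumes "\<forall>x\<in>A. \<forall>y\<in>A. f x = f y \<longleftrightarrow> g x = g y"
  shows "bij_betw (\<lambda>u. g (inv_into A f u)) (f ` A) (g ` A)"
proof -
  have key: "\<And>x. x \<in> A \<Longrightarrow> g (inv_into A f (f x)) = g x"
    using assms by (metis imageI inv_into_into f_inv_into_f)
  show ?thesis
    unfolding bij_betw_def inj_on_def
  proof (intro conjI ballI impI)
    fix u v assume "u \<in> f ` A" "v \<in> f ` A" "g (inv_into A f u) = g (inv_into A f v)"
    then obtain x y where "x \<in> A" "y \<in> A" "u = f x" "v = f y" "g x = g y"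
      using key by auto
    then show "u = v" using assms by auto
  next
    show "(\<lambda>u. g (inv_into A f u)) ` f ` A = g ` A"
      using key by (auto simp: image_image)
  qed
qed

lemma (in group) rcos_eq_iff:
  assumes "subgroup H G" "x \<in> carrier G" "y \<in> carrier G"
  shows "H #> x = H #> y \<longleftrightarrow> x \<otimes> inv y \<in> H"
proof
  assume "H #> x = H #> y"
  then have "H #> (x \<otimes> inv y) = H"
    using coset_mult_inv2[OF _ assms(2,3) subgroup.subset[OF assms(1)]] by blast
  then show "x \<otimes> inv y \<in> H" using coset_join1[OF _ _ assms(1)] assms by simp
next
  assume "x \<otimes> inv y \<in> H"
  then have "H #> (x \<otimes> inv y) = H" using coset_join2[OF _ assms(1)] assms by simp
  then show "H #> x = H #> y" using coset_mult_inv1[OF _ assms(2,3) subgroup.subset[OF assms(1)]] by blast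
qed

lemma (in group) twisted_action:
  assumes psi: "\<psi> \<in> hom G G"
  shows "group_action G (carrier G) (\<lambda>q. \<lambda>y \<in> carrier G. q \<otimes> y \<otimes> inv (\<psi> q))"
proof -
  let ?f = "\<lambda>q. \<lambda>y \<in> carrier G. q \<otimes> y \<otimes> inv (\<psi> q)"
  have pc: "\<And>q. q \<in> carrier G \<Longrightarrow> \<psi> q \<in> carrier G" by (rule hom_in_carrier[OF psi])
  have pm: "\<And>a b. a \<in> carrier G \<Longrightarrow> b \<in> carrier G \<Longrightarrow> \<psi> (a \<otimes> b) = \<psi> a \<otimes> \<psi> b"
    by (rule hom_mult[OF psi])
  have bij: "\<And>q. q \<in> carrier G \<Longrightarrow> ?f q \<in> Bij (carrier G)"
  proof -
    fix q assume q: "q \<in> carrier G"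
    have "bij_betw (?f q) (carrier G) (carrier G)"
      unfolding bij_betw_def inj_on_def
    proof (intro conjI ballI impI)
      fix x y assume "x \<in> carrier G" "y \<in> carrier G" "?f q x = ?f q y"
      then show "x = y" using q pc by simp
    next
      show "?f q ` carrier G = carrier G"
      proof
        show "?f q ` carrier G \<subseteq> carrier G" using q pc by auto
        show "carrier G \<subseteq> ?f q ` carrier G"
        proof
          fix z assume z: "z \<in> carrier G"
          have "inv q \<otimes> z \<otimes> \<psi> q \<in> carrier G" using z q pc by simp
          moreover have "?f q (inv q \<otimes> z \<otimes> \<psi> q) = z"
            using z q pc[OF q] by (simp add: m_assoc[symmetric]) (simp add: m_assoc)
          ultimately show "z \<in> ?f q ` carrier G" by (metis imageI)
        qed
      qed
    qed
    then show "?f q \<in> Bij (carrier G)" by (simp add: Bij_def)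
  qed
  have "?f \<in> hom G (BijGroup (carrier G))"
  proof (rule homI)
    fix q assume "q \<in> carrier G"
    then show "?f q \<in> carrier (BijGroup (carrier G))" using bij by (simp add: BijGroup_def)
  next
    fix a b assume a: "a \<in> carrier G" and b: "b \<in> carrier G"
    have "?f (a \<otimes> b) = (\<lambda>y \<in> carrier G. ?f a (?f b y))"
    proof (rule ext)
      fix y show "?f (a \<otimes> b) y = (\<lambda>y \<in> carrier G. ?f a (?f b y)) y"
        using a b pc[OF a] pc[OF b] by (simp add: pm inv_mult_group m_assoc)
    qed
    then show "?f (a \<otimes> b) = ?f a \<otimes>\<^bsub>BijGroup (carrier G)\<^esub> ?f b"
      using bij a b pc[OF a] pc[OF b] by (simp add: BijGroup_def compose_def fun_eq_iff)
  qed
  then show ?thesis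
    unfolding group_action_def group_hom_def
    by (simp add: group_BijGroup group_hom_axioms.intro is_group)
qed



lemma (in group) twisted_stab_bound:
  assumes psi: "\<psi> \<in> hom G G" and fin: "finite (carrier G)"
    and ck: "card (orbits G (carrier G) (\<lambda>q. \<lambda>y \<in> carrier G. q \<otimes> y \<otimes> inv (\<psi> q))) \<le> k"
    and B: "\<forall>(A::'a set set) s. finite A \<longrightarrow> card A \<le> k \<longrightarrow> (\<forall>a\<in>A. 0 < s a) \<longrightarrow>
               (\<Sum>a\<in>A. 1 / real (s a)) = 1 \<longrightarrow> (\<forall>a\<in>A. s a \<le> B)"
    and x: "x \<in> carrier G"
  shows "card (stabilizer G (\<lambda>q. \<lambda>y \<in> carrier G. q \<otimes> y \<otimes> inv (\<psi> q)) x) \<le> B"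
proof -
  let ?act = "\<lambda>q. \<lambda>y \<in> carrier G. q \<otimes> y \<otimes> inv (\<psi> q)"
  interpret A: group_action G "carrier G" ?act using twisted_action[OF psi] .
  let ?O = "orbits G (carrier G) ?act"
  define s where "s ob = order G div card ob" for ob :: "'a set"
  have orbsub: "\<And>y. y \<in> carrier G \<Longrightarrow> orbit G ?act y \<subseteq> carrier G"
    using A.element_image unfolding orbit_def by blast
  have finO: "finite ?O"
  proof -
    have "?O \<subseteq> Pow (carrier G)" unfolding orbits_def using orbsub by blast
    moreover have "finite (Pow (carrier G))" using fin by simp
    ultimately show ?thesis by (rule finite_subset)
  qed
  have orbpos: "\<And>y. y \<in> carrier G \<Longrightarrow> 0 < card (orbit G ?act y)"
  proof -
    fix y assume y: "y \<in> carrier G"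
    have "y \<in> orbit G ?act y" using A.orbit_refl[OF y] .
    moreover have "finite (orbit G ?act y)" using orbsub[OF y] fin by (rule finite_subset)
    ultimately show "0 < card (orbit G ?act y)" by (simp add: card_gt_0_iff) blast
  qed
  have stabpos: "\<And>y. y \<in> carrier G \<Longrightarrow> 0 < card (stabilizer G ?act y)"
  proof -
    fix y assume y: "y \<in> carrier G"
    have "subgroup (stabilizer G ?act y) G" using A.stabilizer_subgroup y by blast
    then have "\<one> \<in> stabilizer G ?act y" "stabilizer G ?act y \<subseteq> carrier G"
      using subgroup.one_closed subgroup.subset by blast+
    then show "0 < card (stabilizer G ?act y)"
      using fin finite_subset[of "stabilizer G ?act y" "carrier G"] by (auto simp: card_gt_0_iff)
  qed
  have s_orb: "\<And>y. y \<in> carrier G \<Longrightarrow> s (orbit G ?act y) = card (stabilizer G ?act y)"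
  proof -
    fix y assume y: "y \<in> carrier G"
    have e: "card (orbit G ?act y) * card (stabilizer G ?act y) = order G"
      by (rule A.orbit_stabilizer_theorem[OF y])
    have "card (orbit G ?act y) \<noteq> 0" using orbpos[OF y] by simp
    then show "s (orbit G ?act y) = card (stabilizer G ?act y)"
      unfolding s_def e[symmetric] by simp
  qed
  have ordpos: "0 < order G" using fin by (simp add: order_gt_0_iff_finite)
  have sumcard: "(\<Sum>ob\<in>?O. card ob) = order G"
  proof -
    have "(\<Sum>ob\<in>?O. \<Sum>y\<in>ob. (1::nat)) = (\<Sum>y\<in>carrier G. 1)"
      using A.disjoint_sum[OF fin] by blast
    then show ?thesis by (simp add: order_def)
  qed
  have spos: "\<forall>ob\<in>?O. 0 < s ob"
    unfolding orbits_def using s_orb stabpos by auto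
  have eq1: "(\<Sum>ob\<in>?O. 1 / real (s ob)) = 1"
  proof -
    have "\<And>ob. ob \<in> ?O \<Longrightarrow> 1 / real (s ob) = real (card ob) / real (order G)"
    proof -
      fix ob assume "ob \<in> ?O"
      then obtain y where y: "y \<in> carrier G" "ob = orbit G ?act y" unfolding orbits_def by blast
      have "real (card ob) * real (s ob) = real (order G)"
      proof -
        have "card ob * s ob = order G"
          using A.orbit_stabilizer_theorem[OF y(1)] s_orb[OF y(1)] y(2) by simp
        then show ?thesis by (metis of_nat_mult)
      qed
      then show "1 / real (s ob) = real (card ob) / real (order G)"
        using ordpos spos \<open>ob \<in> ?O\<close> by (simp add: field_simps)
    qed
    then have "(\<Sum>ob\<in>?O. 1 / real (s ob)) = (\<Sum>ob\<in>?O. real (card ob) / real (order G))"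
      by (rule sum.cong[OF refl])
    also have "\<dots> = real (\<Sum>ob\<in>?O. card ob) / real (order G)"
      by (simp add: sum_divide_distrib)
    also have "\<dots> = 1" using sumcard ordpos by simp
    finally show ?thesis .
  qed
  have "orbit G ?act x \<in> ?O" using x unfolding orbits_def by blast
  then have "s (orbit G ?act x) \<le> B" using B finO ck spos eq1 by blast
  then show ?thesis using s_orb[OF x] by simp
qed



lemma (in group) finite_subgroups_index:
  assumes fS: "finite S" and SG: "S \<subseteq> carrier G" and gen: "generate G S = carrier G"
  shows "finite {K. subgroup K G \<and> finite (rcosets K) \<and> card (rcosets K) = m}"
proof -
  let ?K = "{K. subgroup K G \<and> finite (rcosets K) \<and> card (rcosets K) = m}"
  define e where "e K = (SOME e. bij_betw e (rcosets K) {..<m})" for K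
  define \<rho> where "\<rho> K g = (\<lambda>i\<in>{..<m}. e K (inv_into (rcosets K) (e K) i #> g))" for K g
  define S' where "S' = S \<union> (\<lambda>s. inv s) ` S"
  define \<Phi> where "\<Phi> K = ((\<lambda>s\<in>S'. \<rho> K s), e K K)" for K
  have ebij: "bij_betw (e K) (rcosets K) {..<m}" if "K \<in> ?K" for K
  proof -
    have "\<exists>f. bij_betw f (rcosets K) {..<m}" using that by (auto simp: bij_betw_iff_card)
    then show ?thesis unfolding e_def by (rule someI_ex)
  qed
  have rcmult: "C #> g \<in> rcosets K" if K: "K \<in> ?K" and C: "C \<in> rcosets K" and g: "g \<in> carrier G" for K C g
  proof -
    obtain x where x: "x \<in> carrier G" "C = K #> x" using C unfolding RCOSETS_def by blast
    have Ks: "K \<subseteq> carrier G" using K subgroup.subset by blast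
    have "C #> g = K #> (x \<otimes> g)" using coset_mult_assoc[OF Ks x(1) g] x(2) by simp
    then show ?thesis using rcosetsI[OF Ks] x(1) g by simp
  qed
  have inv_in: "inv_into (rcosets K) (e K) i \<in> rcosets K" "e K (inv_into (rcosets K) (e K) i) = i"
    if "K \<in> ?K" "i < m" for K i
    using ebij[OF that(1)] that(2)
    by (auto simp: bij_betw_def inv_into_into f_inv_into_f)
  have rho_lt: "\<rho> K g i < m" if "K \<in> ?K" "g \<in> carrier G" "i < m" for K g i
    unfolding \<rho>_def using that ebij[OF that(1)] rcmult[OF that(1) inv_in(1)[OF that(1,3)] that(2)]
    by (auto simp: bij_betw_def)
  have rho_PiE: "\<rho> K g \<in> {..<m} \<rightarrow>\<^sub>E {..<m}" if "K \<in> ?K" "g \<in> carrier G" for K g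
    using rho_lt[OF that] unfolding \<rho>_def by auto
  have rho_mult: "\<rho> K (g \<otimes> h) i = \<rho> K h (\<rho> K g i)"
    if "K \<in> ?K" "g \<in> carrier G" "h \<in> carrier G" "i < m" for K g h i
  proof -
    let ?C = "inv_into (rcosets K) (e K) i"
    have C: "?C \<in> rcosets K" using inv_in[OF that(1,4)] by simp
    have Cs: "?C \<subseteq> carrier G" using C that(1) subgroup.rcosets_carrier is_group by blast
    have Cg: "?C #> g \<in> rcosets K" using rcmult[OF that(1) C that(2)] .
    have inj: "inj_on (e K) (rcosets K)" using ebij[OF that(1)] by (simp add: bij_betw_def)
    have "\<rho> K g i = e K (?C #> g)" unfolding \<rho>_def using that(4) by simp
    moreover have "\<rho> K g i < m" using rho_lt[OF that(1,2,4)] .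
    ultimately have "\<rho> K h (\<rho> K g i) = e K (inv_into (rcosets K) (e K) (e K (?C #> g)) #> h)"
      unfolding \<rho>_def by simp
    also have "\<dots> = e K ((?C #> g) #> h)" using inv_into_f_f[OF inj Cg] by simp
    also have "\<dots> = e K (?C #> (g \<otimes> h))" using coset_mult_assoc[OF Cs that(2,3)] by simp
    also have "\<dots> = \<rho> K (g \<otimes> h) i" unfolding \<rho>_def using that(4) by simp
    finally show ?thesis by simp
  qed
  have rho_one: "\<rho> K \<one> i = i" if "K \<in> ?K" "i < m" for K i
  proof -
    have C: "inv_into (rcosets K) (e K) i \<in> rcosets K" using inv_in[OF that] by simp
    have Cs: "inv_into (rcosets K) (e K) i \<subseteq> carrier G"
      using C that(1) subgroup.rcosets_carrier is_group by blast
    show ?thesis unfolding \<rho>_def using that(2) Cs inv_in(2)[OF that] by simp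
  qed
  have KinK: "K \<in> rcosets K" "e K K < m" if "K \<in> ?K" for K
  proof -
    have Ks: "K \<subseteq> carrier G" using that subgroup.subset by blast
    have "K #> \<one> \<in> rcosets K" using rcosetsI[OF Ks] by simp
    then show "K \<in> rcosets K" using Ks by simp
    then show "e K K < m" using ebij[OF that] by (auto simp: bij_betw_def)
  qed
  have memK: "g \<in> K \<longleftrightarrow> \<rho> K g (e K K) = e K K" if "K \<in> ?K" "g \<in> carrier G" for K g
  proof -
    have sg: "subgroup K G" using that by blast
    have Ks: "K \<subseteq> carrier G" using that subgroup.subset by blast
    have inj: "inj_on (e K) (rcosets K)" using ebij[OF that(1)] by (simp add: bij_betw_def)
    have "inv_into (rcosets K) (e K) (e K K) = K" using inv_into_f_f[OF inj KinK(1)[OF that(1)]] .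
    then have r: "\<rho> K g (e K K) = e K (K #> g)" unfolding \<rho>_def using KinK(2)[OF that(1)] by simp
    have Kg: "K #> g \<in> rcosets K" using rcosetsI[OF Ks that(2)] .
    have "g \<in> K \<longleftrightarrow> K #> g = K"
      using coset_join1[OF _ that(2) sg] coset_join2[OF that(2) sg] by blast
    also have "\<dots> \<longleftrightarrow> e K (K #> g) = e K K"
      using inj Kg KinK(1)[OF that(1)] by (auto simp: inj_on_def)
    finally show ?thesis using r by simp
  qed
  have "inj_on \<Phi> ?K"
  proof (rule inj_onI)
    fix K K' assume K: "K \<in> ?K" and K': "K' \<in> ?K" and eq: "\<Phi> K = \<Phi> K'"
    have eS: "\<And>s. s \<in> S' \<Longrightarrow> \<rho> K s = \<rho> K' s" and eKK: "e K K = e K' K'"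
      using eq unfolding \<Phi>_def by (metis restrict_apply' prod.inject)+
    have agree: "\<forall>i<m. \<rho> K g i = \<rho> K' g i" if "g \<in> generate G S" for g
      using that
    proof (induction g rule: generate.induct)
      case one
      then show ?case using rho_one K K' by simp
    next
      case (incl h) then show ?case using eS S'_def by simp
    next
      case (inv h) then show ?case using eS S'_def by simp
    next
      case (eng h1 h2)
      have c1: "h1 \<in> carrier G" "h2 \<in> carrier G" using eng.hyps gen by auto
      show ?case
      proof (intro allI impI)
        fix i assume i: "i < m"
        have "\<rho> K (h1 \<otimes> h2) i = \<rho> K h2 (\<rho> K h1 i)" using rho_mult[OF K c1 i] .
        also have "\<dots> = \<rho> K' h2 (\<rho> K' h1 i)"
          using eng.IH rho_lt[OF K c1(1) i] i by simp
        also have "\<dots> = \<rho> K' (h1 \<otimes> h2) i" using rho_mult[OF K' c1 i] by simp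
        finally show "\<rho> K (h1 \<otimes> h2) i = \<rho> K' (h1 \<otimes> h2) i" .
      qed
    qed
    have "\<And>g. g \<in> carrier G \<Longrightarrow> g \<in> K \<longleftrightarrow> g \<in> K'"
    proof -
      fix g assume g: "g \<in> carrier G"
      have "g \<in> K \<longleftrightarrow> \<rho> K g (e K K) = e K K" using memK[OF K g] .
      also have "\<dots> \<longleftrightarrow> \<rho> K' g (e K' K') = e K' K'"
        using agree[of g] g gen KinK(2)[OF K] eKK by simp
      also have "\<dots> \<longleftrightarrow> g \<in> K'" using memK[OF K' g] by simp
      finally show "g \<in> K \<longleftrightarrow> g \<in> K'" .
    qed
    moreover have "K \<subseteq> carrier G" "K' \<subseteq> carrier G" using K K' subgroup.subset by blast+
    ultimately show "K = K'" by blast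
  qed
  moreover have "\<Phi> ` ?K \<subseteq> (S' \<rightarrow>\<^sub>E ({..<m} \<rightarrow>\<^sub>E {..<m})) \<times> {..<m}"
  proof
    fix x assume "x \<in> \<Phi> ` ?K"
    then obtain K where K: "K \<in> ?K" "x = \<Phi> K" by blast
    have "S' \<subseteq> carrier G" using SG S'_def by auto
    then show "x \<in> (S' \<rightarrow>\<^sub>E ({..<m} \<rightarrow>\<^sub>E {..<m})) \<times> {..<m}"
      using K rho_PiE KinK(2) unfolding \<Phi>_def by auto
  qed
  moreover have "finite ((S' \<rightarrow>\<^sub>E ({..<m} \<rightarrow>\<^sub>E {..<m})) \<times> {..<m})"
    using fS S'_def by (intro finite_cartesian_product finite_PiE) auto
  ultimately show ?thesis
    by (meson finite_imageD finite_subset)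
qed



lemma (in group) rcosets_as_image: "subgroup H G \<Longrightarrow> rcosets H = (\<lambda>x. H #> x) ` carrier G"
  unfolding RCOSETS_def by auto

lemma (in group) finite_index_by_fun:
  assumes sg: "subgroup H G"
    and rel: "\<And>x y. x \<in> carrier G \<Longrightarrow> y \<in> carrier G \<Longrightarrow> (x \<otimes> inv y \<in> H \<longleftrightarrow> c x = c y)"
    and fin: "finite (c ` carrier G)"
  shows "finite (rcosets H)" "card (rcosets H) = card (c ` carrier G)"
proof -
  have "\<forall>x\<in>carrier G. \<forall>y\<in>carrier G. (H #> x = H #> y) \<longleftrightarrow> c x = c y"
    using rel rcos_eq_iff[OF sg] by blast
  then have b: "bij_betw (\<lambda>u. c (inv_into (carrier G) (\<lambda>x. H #> x) u)) ((\<lambda>x. H #> x) ` carrier G) (c ` carrier G)"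
    by (rule card_image_eqv)
  show "finite (rcosets H)" using bij_betw_finite[OF b] fin rcosets_as_image[OF sg] by simp
  show "card (rcosets H) = card (c ` carrier G)" using bij_betw_same_card[OF b] rcosets_as_image[OF sg] by simp
qed

lemma (in group) funpow_hom:
  assumes "f \<in> hom G G" shows "(f ^^ n) \<in> hom G G"
proof (induction n)
  case 0
  show ?case by (rule homI) auto
next
  case (Suc n)
  show ?case
  proof (rule homI)
    fix x assume "x \<in> carrier G"
    then show "(f ^^ Suc n) x \<in> carrier G" by (simp add: hom_in_carrier[OF assms] hom_in_carrier[OF Suc])
  next
    fix x y assume "x \<in> carrier G" "y \<in> carrier G"
    then show "(f ^^ Suc n) (x \<otimes> y) = (f ^^ Suc n) x \<otimes> (f ^^ Suc n) y"
      by (simp add: hom_mult[OF Suc] hom_mult[OF assms] hom_in_carrier[OF Suc])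
  qed
qed

lemma (in group) preimage_normal:
  assumes f: "f \<in> hom G G" and N: "N \<lhd> G"
  shows "{x \<in> carrier G. f x \<in> N} \<lhd> G"
proof -
  interpret f: group_hom G G f using f by (simp add: group_hom_def group_hom_axioms_def is_group)
  have sN: "subgroup N G" using N normal_imp_subgroup by blast
  have sg: "subgroup {x \<in> carrier G. f x \<in> N} G"
  proof (rule subgroupI)
    show "{x \<in> carrier G. f x \<in> N} \<noteq> {}" using subgroup.one_closed[OF sN] by (auto intro!: exI[of _ \<one>])
  next
    fix a assume "a \<in> {x \<in> carrier G. f x \<in> N}"
    then show "inv a \<in> {x \<in> carrier G. f x \<in> N}" using subgroup.m_inv_closed[OF sN] by simp
  next
    fix a b assume "a \<in> {x \<in> carrier G. f x \<in> N}" "b \<in> {x \<in> carrier G. f x \<in> N}"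
    then show "a \<otimes> b \<in> {x \<in> carrier G. f x \<in> N}" using subgroup.m_closed[OF sN] by simp
  qed auto
  show ?thesis
  proof (rule normal_invI[OF sg])
    fix x h assume "x \<in> carrier G" "h \<in> {x \<in> carrier G. f x \<in> N}"
    then show "x \<otimes> h \<otimes> inv x \<in> {x \<in> carrier G. f x \<in> N}"
      using normal_invE(2)[OF N] by simp
  qed
qed



lemma (in normal) quot_part:
  assumes phi: "\<phi> \<in> hom G G" and finM: "finite (rcosets H)"
    and inv: "\<forall>x\<in>H. \<phi> x \<in> H"
    and fincl: "finite (reidemeister_classes G \<phi>)"
    and B: "\<forall>(A::'a set set set) s. finite A \<longrightarrow> card A \<le> card (reidemeister_classes G \<phi>) \<longrightarrow> (\<forall>a\<in>A. 0 < s a) \<longrightarrow>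
               (\<Sum>a\<in>A. 1 / real (s a)) = 1 \<longrightarrow> (\<forall>a\<in>A. s a \<le> B)"
    and g: "g \<in> carrier G" and T: "T \<subseteq> twisted_stab G \<phi> g" and injT: "inj_on (\<lambda>t. H #> t) T"
  shows "card T \<le> B"
proof -
  let ?Q = "G Mod H"
  have grpQ: "group ?Q" by (rule factorgroup_is_group)
  have cQ: "carrier ?Q = rcosets H" by (simp add: FactGroup_def)
  have sgH: "subgroup H G" by (rule subgroup_axioms)
  have Hs: "H \<subseteq> carrier G" by (rule subset)
  have pc: "\<And>x. x \<in> carrier G \<Longrightarrow> \<phi> x \<in> carrier G" by (rule hom_in_carrier[OF phi])
  have pm: "\<And>x y. x \<in> carrier G \<Longrightarrow> y \<in> carrier G \<Longrightarrow> \<phi> (x \<otimes> y) = \<phi> x \<otimes> \<phi> y"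
    by (rule hom_mult[OF phi])
  interpret phg: group_hom G G \<phi> using phi by (simp add: group_hom_def group_hom_axioms_def is_group)
  have cosin: "\<And>x. x \<in> carrier G \<Longrightarrow> H #> x \<in> carrier ?Q" using cQ rcosetsI[OF Hs] by simp
  define \<psi> where "\<psi> C = H #> \<phi> (SOME x. x \<in> C)" for C
  have psiE: "\<psi> (H #> a) = H #> \<phi> a" if a: "a \<in> carrier G" for a
  proof -
    have "a \<in> H #> a" using rcos_self[OF a sgH] .
    then have x: "(SOME x. x \<in> H #> a) \<in> H #> a" by (rule someI)
    define x where "x = (SOME x. x \<in> H #> a)"
    have xc: "x \<in> carrier G" using x x_def r_coset_subset_G[OF Hs a] by blast
    have "x \<otimes> inv a \<in> H" using rcos_module_imp[OF is_group a] x x_def by simp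
    then have "\<phi> (x \<otimes> inv a) \<in> H" using inv by blast
    then have "\<phi> x \<otimes> inv (\<phi> a) \<in> H" using xc a pm by simp
    then have "H #> \<phi> x = H #> \<phi> a" using rcos_eq_iff[OF sgH] pc xc a by blast
    then show ?thesis unfolding \<psi>_def x_def .
  qed
  have mulQ: "\<And>a b. a \<in> carrier G \<Longrightarrow> b \<in> carrier G \<Longrightarrow> (H #> a) \<otimes>\<^bsub>?Q\<^esub> (H #> b) = H #> (a \<otimes> b)"
    by (simp add: rcos_sum)
  interpret rch: group_hom G ?Q "\<lambda>a. H #> a"
    using r_coset_hom_Mod grpQ by (simp add: group_hom_def group_hom_axioms_def is_group)
  have invQ: "\<And>a. a \<in> carrier G \<Longrightarrow> inv\<^bsub>?Q\<^esub> (H #> a) = H #> inv a"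
    using rch.hom_inv by simp
  have repr: "\<And>C. C \<in> carrier ?Q \<Longrightarrow> \<exists>a\<in>carrier G. C = H #> a"
    using cQ unfolding RCOSETS_def by blast
  have psihom: "\<psi> \<in> hom ?Q ?Q"
  proof (rule homI)
    fix C assume "C \<in> carrier ?Q"
    then obtain a where "a \<in> carrier G" "C = H #> a" using repr by blast
    then show "\<psi> C \<in> carrier ?Q" using psiE cosin pc by simp
  next
    fix C D assume CD: "C \<in> carrier ?Q" "D \<in> carrier ?Q"
    obtain a where a: "a \<in> carrier G" "C = H #> a" using repr[OF CD(1)] by blast
    obtain b where b: "b \<in> carrier G" "D = H #> b" using repr[OF CD(2)] by blast
    note ab = a b
    show "\<psi> (C \<otimes>\<^bsub>?Q\<^esub> D) = \<psi> C \<otimes>\<^bsub>?Q\<^esub> \<psi> D"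
    proof -
      have ab1: "a \<otimes> b \<in> carrier G" using a(1) b(1) by (rule m_closed)
      have "C \<otimes>\<^bsub>?Q\<^esub> D = H #> (a \<otimes> b)"
        unfolding a(2) b(2) mult_FactGroup by (rule rcos_sum[OF a(1) b(1)])
      then have "\<psi> (C \<otimes>\<^bsub>?Q\<^esub> D) = H #> \<phi> (a \<otimes> b)" using psiE[OF ab1] by simp
      also have "\<dots> = H #> (\<phi> a \<otimes> \<phi> b)" using pm[OF a(1) b(1)] by simp
      also have "\<dots> = (H #> \<phi> a) <#> (H #> \<phi> b)" by (rule rcos_sum[OF pc[OF a(1)] pc[OF b(1)], symmetric])
      also have "\<dots> = \<psi> C \<otimes>\<^bsub>?Q\<^esub> \<psi> D" unfolding a(2) b(2) mult_FactGroup psiE[OF a(1)] psiE[OF b(1)] ..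
      finally show ?thesis .
    qed
  qed
  let ?act = "\<lambda>q. \<lambda>y \<in> carrier ?Q. q \<otimes>\<^bsub>?Q\<^esub> y \<otimes>\<^bsub>?Q\<^esub> inv\<^bsub>?Q\<^esub> (\<psi> q)"
  interpret A: group_action ?Q "carrier ?Q" ?act using group.twisted_action[OF grpQ psihom] .
  have actE: "?act (H #> h) (H #> x) = H #> (h \<otimes> x \<otimes> inv (\<phi> h))"
    if h: "h \<in> carrier G" and x: "x \<in> carrier G" for h x
  proof -
    have hx: "h \<otimes> x \<in> carrier G" using h x by simp
    have i: "inv (\<phi> h) \<in> carrier G" using pc[OF h] by simp
    have "?act (H #> h) (H #> x) = (H #> h) \<otimes>\<^bsub>?Q\<^esub> (H #> x) \<otimes>\<^bsub>?Q\<^esub> inv\<^bsub>?Q\<^esub> (\<psi> (H #> h))"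
      using cosin[OF x] by (rule restrict_apply')
    also have "\<dots> = (H #> (h \<otimes> x)) \<otimes>\<^bsub>?Q\<^esub> (H #> inv (\<phi> h))"
      by (simp only: mulQ[OF h x] psiE[OF h] invQ[OF pc[OF h]])
    also have "\<dots> = H #> (h \<otimes> x \<otimes> inv (\<phi> h))" by (rule mulQ[OF hx i])
    finally show ?thesis .
  qed
  define F where "F C = orbit ?Q ?act (H #> (SOME x. x \<in> C))" for C
  have orbsF: "orbits ?Q (carrier ?Q) ?act \<subseteq> F ` reidemeister_classes G \<phi>"
  proof
    fix ob assume "ob \<in> orbits ?Q (carrier ?Q) ?act"
    then obtain y where y: "y \<in> carrier ?Q" "ob = orbit ?Q ?act y" unfolding orbits_def by blast
    then obtain x where x: "x \<in> carrier G" "y = H #> x" using repr by blast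
    define C where "C = twisted_conj G \<phi> `` {x}"
    have Ccl: "C \<in> reidemeister_classes G \<phi>"
      unfolding C_def reidemeister_classes_def using x(1) by (rule quotientI)
    have "x \<in> C" unfolding C_def twisted_conj_def using x(1)
      by (auto intro!: bexI[of _ \<one>])
    then have zC: "(SOME z. z \<in> C) \<in> C" by (rule someI)
    define z where "z = (SOME z. z \<in> C)"
    have "z \<in> C" using zC unfolding z_def .
    then have xz: "(x, z) \<in> twisted_conj G \<phi>" unfolding C_def by simp
    then have "\<exists>h\<in>carrier G. z = h \<otimes> x \<otimes> inv (\<phi> h)" "z \<in> carrier G"
      unfolding twisted_conj_def by simp_all
    then obtain h where h: "h \<in> carrier G" "z = h \<otimes> x \<otimes> inv (\<phi> h)" and zcar: "z \<in> carrier G"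
      by blast
    have "H #> z = ?act (H #> h) (H #> x)" using actE[OF h(1) x(1)] h(2) by simp
    then have "H #> z \<in> orbit ?Q ?act (H #> x)" unfolding orbit_def using cosin[OF h(1)] by blast
    moreover have "H #> z \<in> orbit ?Q ?act (H #> z)" using A.orbit_refl cosin[OF zcar] by blast
    moreover have "orbit ?Q ?act (H #> x) \<in> orbits ?Q (carrier ?Q) ?act"
      "orbit ?Q ?act (H #> z) \<in> orbits ?Q (carrier ?Q) ?act"
      unfolding orbits_def using cosin x zcar by blast+
    ultimately have "orbit ?Q ?act (H #> z) = orbit ?Q ?act (H #> x)"
      using A.disjoint_union by blast
    then have "ob = F C" unfolding F_def z_def[symmetric] using y x by simp
    then show "ob \<in> F ` reidemeister_classes G \<phi>" using Ccl by blast
  qed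
  have ck: "card (orbits ?Q (carrier ?Q) ?act) \<le> card (reidemeister_classes G \<phi>)"
  proof -
    have "card (orbits ?Q (carrier ?Q) ?act) \<le> card (F ` reidemeister_classes G \<phi>)"
      using orbsF fincl by (intro card_mono) auto
    also have "\<dots> \<le> card (reidemeister_classes G \<phi>)" by (rule card_image_le[OF fincl])
    finally show ?thesis .
  qed
  have finQ: "finite (carrier ?Q)" using cQ finM by simp
  have bound: "card (stabilizer ?Q ?act (H #> g)) \<le> B"
    using group.twisted_stab_bound[OF grpQ psihom finQ ck B cosin[OF g]] .
  have sub: "(\<lambda>t. H #> t) ` T \<subseteq> stabilizer ?Q ?act (H #> g)"
  proof
    fix q assume "q \<in> (\<lambda>t. H #> t) ` T"
    then obtain t where t: "t \<in> T" "q = H #> t" by blast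
    have tc: "t \<in> carrier G" and teq: "g = t \<otimes> g \<otimes> inv (\<phi> t)"
      using T t(1) unfolding twisted_stab_def by auto
    have "?act (H #> t) (H #> g) = H #> g" using actE[OF tc g] teq by simp
    then show "q \<in> stabilizer ?Q ?act (H #> g)"
      unfolding stabilizer_def using t cosin[OF tc] by simp
  qed
  have "finite (stabilizer ?Q ?act (H #> g))"
    using finQ unfolding stabilizer_def by simp
  then have "card ((\<lambda>t. H #> t) ` T) \<le> card (stabilizer ?Q ?act (H #> g))"
    using sub by (rule card_mono)
  then show ?thesis using card_image[OF injT] bound by simp
qed



theorem mainTheorem10:
  fixes G (structure) and \<phi> :: "'a \<Rightarrow> 'a"
  assumes "group G"
    and "fin_gen_group G"
    and "residually_finite G"
    and "\<phi> \<in> iso G G"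
    and "g \<in> carrier G"
    and "infinite (twisted_stab G \<phi> g)"
  shows "infinite (reidemeister_classes G \<phi>)"
proof
  assume fincl: "finite (reidemeister_classes G \<phi>)"
  interpret group G by (rule assms(1))
  have phi: "\<phi> \<in> hom G G" using assms(4) by (simp add: iso_def)
  obtain B where B: "\<forall>(A::'a set set set) s. finite A \<longrightarrow> card A \<le> card (reidemeister_classes G \<phi>) \<longrightarrow> (\<forall>a\<in>A. 0 < s a) \<longrightarrow>
               (\<Sum>a\<in>A. 1 / real (s a)) = 1 \<longrightarrow> (\<forall>a\<in>A. s a \<le> B)"
    using egypt[of "card (reidemeister_classes G \<phi>)"] by blast
  obtain T where T: "finite T" "card T = Suc B" "T \<subseteq> twisted_stab G \<phi> g"
    using infinite_arbitrarily_large[OF assms(6)] by blast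
  have Tc: "T \<subseteq> carrier G" using T(3) unfolding twisted_stab_def by auto
  define P where "P = {p. fst p \<in> T \<and> snd p \<in> T \<and> fst p \<noteq> snd p}"
  have finP: "finite P"
  proof -
    have "P \<subseteq> T \<times> T" unfolding P_def by auto
    then show ?thesis using T(1) finite_subset by blast
  qed
  have "\<forall>p\<in>P. \<exists>N. N \<lhd> G \<and> finite (rcosets N) \<and> fst p \<otimes> inv (snd p) \<notin> N"
  proof
    fix p assume p: "p \<in> P"
    have c: "fst p \<in> carrier G" "snd p \<in> carrier G" using p Tc unfolding P_def by auto
    have ne: "fst p \<noteq> snd p" using p unfolding P_def by auto
    have ec: "fst p \<otimes> inv (snd p) \<in> carrier G" using c by simp
    have "fst p \<otimes> inv (snd p) \<noteq> \<one>"
    proof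
      assume e: "fst p \<otimes> inv (snd p) = \<one>"
      have "fst p = fst p \<otimes> inv (snd p) \<otimes> snd p" using c by (simp add: m_assoc)
      also have "\<dots> = snd p" using e c by simp
      finally show False using ne by simp
    qed
    then show "\<exists>N. N \<lhd> G \<and> finite (rcosets N) \<and> fst p \<otimes> inv (snd p) \<notin> N"
      using assms(3) ec unfolding residually_finite_def by blast
  qed
  then obtain Nf where Nf: "\<And>p. p \<in> P \<Longrightarrow> Nf p \<lhd> G \<and> finite (rcosets (Nf p)) \<and> fst p \<otimes> inv (snd p) \<notin> Nf p"
    by metis
  have Nfsg: "\<And>p. p \<in> P \<Longrightarrow> subgroup (Nf p) G" using Nf normal_imp_subgroup by blast
  define N0 where "N0 = {x \<in> carrier G. \<forall>p\<in>P. x \<in> Nf p}"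
  have N0sg: "subgroup N0 G"
  proof (rule subgroupI)
    show "N0 \<subseteq> carrier G" unfolding N0_def by auto
    have "\<one> \<in> N0" unfolding N0_def by (auto intro: subgroup.one_closed[OF Nfsg])
    then show "N0 \<noteq> {}" by blast
  next
    fix a assume "a \<in> N0" then show "inv a \<in> N0"
      unfolding N0_def by (auto intro: subgroup.m_inv_closed[OF Nfsg])
  next
    fix a b assume "a \<in> N0" "b \<in> N0" then show "a \<otimes> b \<in> N0"
      unfolding N0_def by (auto intro: subgroup.m_closed[OF Nfsg])
  qed
  have N0n: "N0 \<lhd> G"
  proof (rule normal_invI[OF N0sg])
    fix x h assume "x \<in> carrier G" "h \<in> N0"
    then show "x \<otimes> h \<otimes> inv x \<in> N0" unfolding N0_def by (auto intro: normal_invE(2)[OF conjunct1[OF Nf]])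
  qed
  have finN0: "finite (rcosets N0)"
  proof (rule finite_index_by_fun(1)[OF N0sg, of "\<lambda>x. \<lambda>p\<in>P. Nf p #> x"])
    fix x y assume x: "x \<in> carrier G" and y: "y \<in> carrier G"
    have "x \<otimes> inv y \<in> N0 \<longleftrightarrow> (\<forall>p\<in>P. x \<otimes> inv y \<in> Nf p)" unfolding N0_def using x y by simp
    also have "\<dots> \<longleftrightarrow> (\<forall>p\<in>P. Nf p #> x = Nf p #> y)"
    proof -
      have "\<And>p. p \<in> P \<Longrightarrow> (Nf p #> x = Nf p #> y) \<longleftrightarrow> x \<otimes> inv y \<in> Nf p"
        using rcos_eq_iff Nfsg x y by blast
      then show ?thesis by simp
    qed
    also have "\<dots> \<longleftrightarrow> (\<lambda>p\<in>P. Nf p #> x) = (\<lambda>p\<in>P. Nf p #> y)"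
      by (auto simp: fun_eq_iff restrict_def)
    finally show "x \<otimes> inv y \<in> N0 \<longleftrightarrow> (\<lambda>p\<in>P. Nf p #> x) = (\<lambda>p\<in>P. Nf p #> y)" .
  next
    have "(\<lambda>x. \<lambda>p\<in>P. Nf p #> x) ` carrier G \<subseteq> P \<rightarrow>\<^sub>E (\<Union>p\<in>P. rcosets (Nf p))"
    proof -
      have r: "\<And>x p. x \<in> carrier G \<Longrightarrow> p \<in> P \<Longrightarrow> Nf p #> x \<in> rcosets (Nf p)"
        by (rule rcosetsI[OF subgroup.subset[OF Nfsg]])
      show ?thesis
      proof
        fix f assume "f \<in> (\<lambda>x. \<lambda>p\<in>P. Nf p #> x) ` carrier G"
        then obtain x where x: "x \<in> carrier G" "f = (\<lambda>p\<in>P. Nf p #> x)" by blast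
        show "f \<in> P \<rightarrow>\<^sub>E (\<Union>p\<in>P. rcosets (Nf p))" unfolding x(2) using r[OF x(1)] by auto
      qed
    qed
    moreover have "finite (P \<rightarrow>\<^sub>E (\<Union>p\<in>P. rcosets (Nf p)))"
      using finP Nf by (intro finite_PiE) auto
    ultimately show "finite ((\<lambda>x. \<lambda>p\<in>P. Nf p #> x) ` carrier G)" by (rule finite_subset)
  qed
  have hn: "\<And>n. group_hom G G (\<phi> ^^ n)"
    using funpow_hom[OF phi] by (simp add: group_hom_def group_hom_axioms_def is_group)
  define K where "K n = {x \<in> carrier G. (\<phi> ^^ n) x \<in> N0}" for n
  have Kn: "\<And>n. K n \<lhd> G" unfolding K_def using preimage_normal[OF funpow_hom[OF phi] N0n] .
  have relK: "x \<otimes> inv y \<in> K n \<longleftrightarrow> N0 #> (\<phi> ^^ n) x = N0 #> (\<phi> ^^ n) y"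
    if x: "x \<in> carrier G" and y: "y \<in> carrier G" for x y n
  proof -
    have cx: "(\<phi> ^^ n) x \<in> carrier G" "(\<phi> ^^ n) y \<in> carrier G"
      using x y group_hom.hom_closed[OF hn] by auto
    have "x \<otimes> inv y \<in> K n \<longleftrightarrow> (\<phi> ^^ n) (x \<otimes> inv y) \<in> N0" unfolding K_def using x y by simp
    also have "(\<phi> ^^ n) (x \<otimes> inv y) = (\<phi> ^^ n) x \<otimes> inv ((\<phi> ^^ n) y)"
      using x y group_hom.hom_mult[OF hn] group_hom.hom_inv[OF hn] by simp
    finally show ?thesis using rcos_eq_iff[OF N0sg cx] by simp
  qed
  have Kfin: "finite (rcosets (K n)) \<and> card (rcosets (K n)) \<le> card (rcosets N0)" for n
  proof -
    have sg: "subgroup (K n) G" using Kn normal_imp_subgroup by blast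
    have im: "(\<lambda>x. N0 #> (\<phi> ^^ n) x) ` carrier G \<subseteq> rcosets N0"
      using rcosetsI[OF subgroup.subset[OF N0sg]] group_hom.hom_closed[OF hn] by auto
    then have fi: "finite ((\<lambda>x. N0 #> (\<phi> ^^ n) x) ` carrier G)" using finN0 finite_subset by blast
    have r: "\<And>x y. x \<in> carrier G \<Longrightarrow> y \<in> carrier G \<Longrightarrow>
       (x \<otimes> inv y \<in> K n \<longleftrightarrow> (\<lambda>x. N0 #> (\<phi> ^^ n) x) x = (\<lambda>x. N0 #> (\<phi> ^^ n) x) y)"
      using relK by simp
    show ?thesis
      using finite_index_by_fun[OF sg r fi] card_mono[OF finN0 im] by simp
  qed
  obtain S where S: "finite S" "S \<subseteq> carrier G" "generate G S = carrier G"
    using assms(2) unfolding fin_gen_group_def by blast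
  have "range K \<subseteq> (\<Union>m\<in>{..card (rcosets N0)}. {H. subgroup H G \<and> finite (rcosets H) \<and> card (rcosets H) = m})"
    using Kfin Kn normal_imp_subgroup by fastforce
  moreover have "finite (\<Union>m\<in>{..card (rcosets N0)}. {H. subgroup H G \<and> finite (rcosets H) \<and> card (rcosets H) = m})"
    using finite_subgroups_index[OF S] by simp
  ultimately have finK: "finite (range K)" by (rule finite_subset)
  define I where "I = (\<lambda>H. SOME n. H = K n) ` range K"
  have finI: "finite I" unfolding I_def using finK by simp
  have coverI: "\<exists>i\<in>I. K i = K n" for n
  proof -
    have "K n = K (SOME m. K n = K m)" by (rule someI) (rule refl)
    moreover have "(SOME m. K n = K m) \<in> I" unfolding I_def by blast
    ultimately show ?thesis by metis
  qed
  define M where "M = {x \<in> carrier G. \<forall>n. (\<phi> ^^ n) x \<in> N0}"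
  have Ksg: "\<And>n. subgroup (K n) G" using Kn normal_imp_subgroup by blast
  have MK: "M = {x \<in> carrier G. \<forall>n. x \<in> K n}" unfolding M_def K_def by auto
  have Msg: "subgroup M G"
  proof (rule subgroupI)
    show "M \<subseteq> carrier G" unfolding M_def by auto
    have "\<one> \<in> M" unfolding MK by (auto intro: subgroup.one_closed[OF Ksg])
    then show "M \<noteq> {}" by blast
  next
    fix a assume "a \<in> M" then show "inv a \<in> M"
      unfolding MK by (auto intro: subgroup.m_inv_closed[OF Ksg])
  next
    fix a b assume "a \<in> M" "b \<in> M" then show "a \<otimes> b \<in> M"
      unfolding MK by (auto intro: subgroup.m_closed[OF Ksg])
  qed
  have Mn: "M \<lhd> G"
  proof (rule normal_invI[OF Msg])
    fix x h assume "x \<in> carrier G" "h \<in> M"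
    then show "x \<otimes> h \<otimes> inv x \<in> M" unfolding MK by (auto intro: normal_invE(2)[OF Kn])
  qed
  have finM: "finite (rcosets M)"
  proof (rule finite_index_by_fun(1)[OF Msg, of "\<lambda>x. \<lambda>i\<in>I. N0 #> (\<phi> ^^ i) x"])
    fix x y assume x: "x \<in> carrier G" and y: "y \<in> carrier G"
    have "x \<otimes> inv y \<in> M \<longleftrightarrow> (\<forall>n. x \<otimes> inv y \<in> K n)" unfolding MK using x y by simp
    also have "\<dots> \<longleftrightarrow> (\<forall>i\<in>I. x \<otimes> inv y \<in> K i)" using coverI by metis
    also have "\<dots> \<longleftrightarrow> (\<forall>i\<in>I. N0 #> (\<phi> ^^ i) x = N0 #> (\<phi> ^^ i) y)" using relK[OF x y] by simp
    also have "\<dots> \<longleftrightarrow> (\<lambda>i\<in>I. N0 #> (\<phi> ^^ i) x) = (\<lambda>i\<in>I. N0 #> (\<phi> ^^ i) y)"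
      by (auto simp: fun_eq_iff restrict_def)
    finally show "x \<otimes> inv y \<in> M \<longleftrightarrow> (\<lambda>i\<in>I. N0 #> (\<phi> ^^ i) x) = (\<lambda>i\<in>I. N0 #> (\<phi> ^^ i) y)" .
  next
    have "(\<lambda>x. \<lambda>i\<in>I. N0 #> (\<phi> ^^ i) x) ` carrier G \<subseteq> I \<rightarrow>\<^sub>E rcosets N0"
      using rcosetsI[OF subgroup.subset[OF N0sg]] group_hom.hom_closed[OF hn] by auto
    moreover have "finite (I \<rightarrow>\<^sub>E rcosets N0)"
      using finI finN0 by (intro finite_PiE) auto
    ultimately show "finite ((\<lambda>x. \<lambda>i\<in>I. N0 #> (\<phi> ^^ i) x) ` carrier G)" by (rule finite_subset)
  qed
  have inv: "\<forall>x\<in>M. \<phi> x \<in> M"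
  proof
    fix x assume x: "x \<in> M"
    have xc: "x \<in> carrier G" and h: "\<forall>n. (\<phi> ^^ n) x \<in> N0" using x unfolding M_def by auto
    have "\<forall>n. (\<phi> ^^ n) (\<phi> x) \<in> N0"
    proof
      fix n
      have "(\<phi> ^^ n) (\<phi> x) = (\<phi> ^^ Suc n) x" by (metis comp_apply funpow_Suc_right)
      then show "(\<phi> ^^ n) (\<phi> x) \<in> N0" using h by metis
    qed
    then show "\<phi> x \<in> M" using hom_in_carrier[OF phi xc] unfolding M_def by auto
  qed
  have MN0: "M \<subseteq> N0" unfolding M_def by (auto dest: spec[of _ 0])
  have injT: "inj_on (\<lambda>t. M #> t) T"
  proof (rule inj_onI)
    fix t t' assume t: "t \<in> T" and t': "t' \<in> T" and eq: "M #> t = M #> t'"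
    show "t = t'"
    proof (rule ccontr)
      assume ne: "t \<noteq> t'"
      then have p: "(t, t') \<in> P" unfolding P_def using t t' by simp
      have "t \<otimes> inv t' \<in> M" using eq rcos_eq_iff[OF Msg] t t' Tc by blast
      then have "t \<otimes> inv t' \<in> Nf (t, t')" using MN0 p unfolding N0_def by auto
      then show False using Nf[OF p] by simp
    qed
  qed
  have "card T \<le> B"
    using normal.quot_part[OF Mn phi finM inv fincl B assms(5) T(3) injT] .
  then show False using T(2) by simp
qed

end
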